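(* If a selection $\mathtt{SEL}$ of the consistent set map is $(\gamma,T)$-weakly competitive, then it is $(k\gamma,kT)$-weakly competitive for every $k\in\mathbb{N}$.
   Context: $(\mathbb{T},\mathsf{K},d)$ is a compact parametrization of a set $\mathcal{F}$ of functions $\mathbb{N}\times\mathcal{X}\times\mathcal{U}\to\mathcal{X}$. For a finite data set $\mathcal{D}$ of points $(t,x^+,x,u)$, $\mathsf{P}(\mathcal{D})$ is the closure of $\{\theta\in\mathsf{K}:\exists f\in\mathbb{T}[\theta],\ x^+=f(t,x,u)\ \forall(t,x^+,x,u)\in\mathcal{D}\}$; $\mathtt{SEL}$ is a selection if $\mathtt{SEL}[\mathcal{D}]\in\mathsf{P}(\mathcal{D})$. $\mathtt{SEL}$ is $(\gamma,T)$-weakly competitive if for every data stream $\mathcal{D}_t=(d_1,\dots,d_t)$ with some $f\in\mathcal{F}$ consistent with all $\mathcal{D}_t$, $\theta_t=\mathtt{SEL}[\mathcal{D}_t]$ satisfies $\sum_{t=t_1+1}^{t_2}d(\theta_t,\theta_{t-1})\le\gamma d_H(\mathsf{P}(\mathcal{D}_{t_2}),\mathsf{P}(\mathcal{D}_{t_1}))$ whenever $t_2-t_1\le T$; $d_H$ is the Hausdorff distance. *)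

theory Defs
  imports "HOL-Analysis.Analysis"
begin

text \<open>A data point (t, x+, x, u).\<close>
type_synonym ('x,'u) datapoint = "nat \<times> 'x \<times> 'x \<times> 'u"

text \<open>Hausdorff distance between (nonempty, bounded) subsets of a metric space.\<close>
definition hausdorff_dist :: "'a::metric_space set \<Rightarrow> 'a set \<Rightarrow> real" where
  "hausdorff_dist A B = max (SUP a\<in>A. infdist a B) (SUP b\<in>B. infdist b A)"

definition param_family ::
  "('p \<Rightarrow> (nat \<Rightarrow> 'x \<Rightarrow> 'u \<Rightarrow> 'x) set) \<Rightarrow> 'p set \<Rightarrow> (nat \<Rightarrow> 'x \<Rightarrow> 'u \<Rightarrow> 'x) set" where
  "param_family TT K = (\<Union>\<theta>\<in>K. TT \<theta>)"

definition consistent :: "(nat \<Rightarrow> 'x \<Rightarrow> 'u \<Rightarrow> 'x) \<Rightarrow> ('x,'u) datapoint set \<Rightarrow> bool" where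
  "consistent f D \<longleftrightarrow> (\<forall>(t, xp, x, u)\<in>D. xp = f t x u)"

definition consistent_set ::
  "('p::metric_space \<Rightarrow> (nat \<Rightarrow> 'x \<Rightarrow> 'u \<Rightarrow> 'x) set) \<Rightarrow> 'p set \<Rightarrow> ('x,'u) datapoint set \<Rightarrow> 'p set" where
  "consistent_set TT K D = closure {\<theta>\<in>K. \<exists>f\<in>TT \<theta>. consistent f D}"

definition is_selection ::
  "('p::metric_space \<Rightarrow> (nat \<Rightarrow> 'x \<Rightarrow> 'u \<Rightarrow> 'x) set) \<Rightarrow> 'p set \<Rightarrow> (('x,'u) datapoint list \<Rightarrow> 'p) \<Rightarrow> bool" where
  "is_selection TT K SEL \<longleftrightarrow>
     (\<forall>D. consistent_set TT K (set D) \<noteq> {} \<longrightarrow> SEL D \<in> consistent_set TT K (set D))"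

text \<open>The data set D_t = (d_1,...,d_t) of a data stream ds (ds i is d_i, i \<ge> 1).\<close>
definition data_prefix :: "(nat \<Rightarrow> ('x,'u) datapoint) \<Rightarrow> nat \<Rightarrow> ('x,'u) datapoint list" where
  "data_prefix ds t = map ds [1..<Suc t]"

definition weakly_competitive ::
  "('p::metric_space \<Rightarrow> (nat \<Rightarrow> 'x \<Rightarrow> 'u \<Rightarrow> 'x) set) \<Rightarrow> 'p set \<Rightarrow> (('x,'u) datapoint list \<Rightarrow> 'p)
     \<Rightarrow> real \<Rightarrow> nat \<Rightarrow> bool" where
  "weakly_competitive TT K SEL \<gamma> T \<longleftrightarrow>
     (\<forall>ds :: nat \<Rightarrow> ('x,'u) datapoint.
        (\<exists>f\<in>param_family TT K. \<forall>t. consistent f (set (data_prefix ds t))) \<longrightarrow>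
        (\<forall>t1 t2. t1 \<le> t2 \<and> t2 - t1 \<le> T \<longrightarrow>
           (\<Sum>t\<in>{t1<..t2}. dist (SEL (data_prefix ds t)) (SEL (data_prefix ds (t - 1))))
             \<le> \<gamma> * hausdorff_dist (consistent_set TT K (set (data_prefix ds t2)))
                                    (consistent_set TT K (set (data_prefix ds t1)))))"

end

theory Submission
  imports Defs
begin

lemma bdd_infdist:
  assumes "bounded B" "a0 \<in> A" "A \<subseteq> B"
  shows "bdd_above ((\<lambda>b. infdist b A) ` B)"
proof -
  obtain e where e: "\<forall>x\<in>B. \<forall>y\<in>B. dist x y \<le> e" using assms(1) bounded_two_points by blast
  show ?thesis unfolding bdd_above_def
  proof (intro exI ballI)
    fix r assume "r \<in> (\<lambda>b. infdist b A) ` B"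
    then obtain b where b: "b \<in> B" "r = infdist b A" by auto
    have "infdist b A \<le> dist b a0" using infdist_le assms(2) by blast
    also have "\<dots> \<le> e" using e b assms by blast
    finally show "r \<le> e" using b by simp
  qed
qed

lemma hd_sub:
  assumes "A \<subseteq> B" "A \<noteq> {}" "bounded B"
  shows "hausdorff_dist A B = (SUP b\<in>B. infdist b A)"
    and "0 \<le> hausdorff_dist A B"
proof -
  have "(SUP a\<in>A. infdist a B) = (SUP a\<in>A. (0::real))"
    using assms by (intro SUP_cong) (auto intro!: infdist_zero)
  also have "\<dots> = 0" using assms(2) by simp
  finally have 1: "(SUP a\<in>A. infdist a B) = 0" .
  obtain a0 where a0: "a0 \<in> A" using assms by auto
  have "0 \<le> (SUP b\<in>B. infdist b A)"
    using assms a0 bdd_infdist[OF assms(3) a0 assms(1)]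
    by (meson cSUP_upper2 infdist_nonneg subsetD)
  then show "hausdorff_dist A B = (SUP b\<in>B. infdist b A)"
    unfolding hausdorff_dist_def 1 by simp
  then show "0 \<le> hausdorff_dist A B" using \<open>0 \<le> _\<close> by simp
qed

lemma hd_mono:
  assumes "A \<subseteq> A'" "A' \<subseteq> B'" "B' \<subseteq> B" "A \<noteq> {}" "bounded B"
  shows "hausdorff_dist A' B' \<le> hausdorff_dist A B"
proof -
  have bB': "bounded B'" using assms bounded_subset by blast
  have A'ne: "A' \<noteq> {}" using assms by auto
  obtain a0 where a0: "a0 \<in> A" using assms by auto
  have "hausdorff_dist A' B' = (SUP b\<in>B'. infdist b A')"
    using hd_sub(1)[OF assms(2) A'ne bB'] .
  also have "\<dots> \<le> (SUP b\<in>B. infdist b A)"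
  proof (rule cSUP_mono)
    show "B' \<noteq> {}" using assms by auto
    show "bdd_above ((\<lambda>b. infdist b A) ` B)"
      using bdd_infdist[OF assms(5) a0] assms by (meson order_trans)
    fix b assume "b \<in> B'"
    then show "\<exists>m\<in>B. infdist b A' \<le> infdist m A"
      using assms infdist_mono by blast
  qed
  also have "\<dots> = hausdorff_dist A B"
    using hd_sub(1)[of A B] assms by auto
  finally show ?thesis .
qed

lemma hd_zero:
  assumes "A \<subseteq> B" "A \<noteq> {}" "bounded B" "closed A" "hausdorff_dist A B \<le> 0"
  shows "A = B"
proof -
  obtain a0 where a0: "a0 \<in> A" using assms by auto
  have "B \<subseteq> A"
  proof
    fix b assume b: "b \<in> B"
    have "infdist b A \<le> (SUP b\<in>B. infdist b A)"
      using cSUP_upper[OF b bdd_infdist[OF assms(3) a0 assms(1)]] .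
    also have "\<dots> \<le> 0" using hd_sub(1)[OF assms(1-3)] assms(5) by simp
    finally have "infdist b A = 0" using infdist_nonneg by (metis order_antisym)
    then show "b \<in> A" using in_closure_iff_infdist_zero[OF assms(2)] assms(4) closure_closed by metis
  qed
  then show ?thesis using assms by auto
qed

lemma hd_self:
  assumes "A \<noteq> {}" "bounded A"
  shows "hausdorff_dist A A = 0"
proof -
  have "hausdorff_dist A A = (SUP b\<in>A. infdist b A)" using hd_sub(1)[OF _ assms] by simp
  also have "\<dots> = (SUP b\<in>A. (0::real))" by (intro SUP_cong) (auto intro!: infdist_zero)
  also have "\<dots> = 0" using assms by simp
  finally show ?thesis .
qed

lemma sum_split:
  fixes S :: "nat \<Rightarrow> real"
  assumes "t1 \<le> s" "s \<le> t2"
  shows "sum S {t1<..t2} = sum S {t1<..s} + sum S {s<..t2}"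
proof -
  have "{t1<..t2} = {t1<..s} \<union> {s<..t2}" using assms by auto
  then show ?thesis by (simp add: sum.union_disjoint ivl_disj_int)
qed

lemma chain_main:
  fixes P :: "nat \<Rightarrow> 'p::metric_space set" and S :: "nat \<Rightarrow> real"
  assumes anti: "\<And>t t'. t \<le> t' \<Longrightarrow> P t' \<subseteq> P t"
    and ne: "\<And>t. P t \<noteq> {}" and bd: "\<And>t. bounded (P t)" and cl: "\<And>t. closed (P t)"
    and Snn: "\<And>t. 0 \<le> S t"
    and hyp: "\<forall>t1 t2. t1 \<le> t2 \<and> t2 - t1 \<le> T \<longrightarrow>
                sum S {t1<..t2} \<le> \<gamma> * hausdorff_dist (P t2) (P t1)"
  shows "t1 \<le> t2 \<Longrightarrow> t2 - t1 \<le> k*T \<Longrightarrow>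
           sum S {t1<..t2} \<le> real k * \<gamma> * hausdorff_dist (P t2) (P t1)"
proof (cases "\<gamma> \<ge> 0")
  case True
  have Hnn: "\<And>a b. a \<le> b \<Longrightarrow> 0 \<le> hausdorff_dist (P b) (P a)"
    using hd_sub(2)[OF anti ne bd] by blast
  show "t1 \<le> t2 \<Longrightarrow> t2 - t1 \<le> k*T \<Longrightarrow> ?thesis"
  proof (induction k arbitrary: t1)
    case 0
    then have "t1 = t2" by simp
    then show ?case by simp
  next
    case (Suc k)
    show ?case
    proof (cases "t2 - t1 \<le> T")
      case True
      then have "sum S {t1<..t2} \<le> \<gamma> * hausdorff_dist (P t2) (P t1)" using hyp Suc by blast
      also have "\<dots> \<le> real (Suc k) * \<gamma> * hausdorff_dist (P t2) (P t1)"
        using \<open>\<gamma> \<ge> 0\<close> Hnn[OF Suc.prems(1)]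
        by (simp add: distrib_right mult_nonneg_nonneg)
      finally show ?thesis .
    next
      case False
      define s where "s = t1 + T"
      have s1: "t1 \<le> s" "s \<le> t2" "s - t1 \<le> T" "t2 - s \<le> k * T"
        using False Suc.prems unfolding s_def by auto
      have "sum S {t1<..t2} = sum S {t1<..s} + sum S {s<..t2}" using sum_split s1 by blast
      also have "\<dots> \<le> \<gamma> * hausdorff_dist (P s) (P t1)
                     + real k * \<gamma> * hausdorff_dist (P t2) (P s)"
        using hyp s1 Suc.IH[of s] by (intro add_mono) auto
      also have "\<dots> \<le> \<gamma> * hausdorff_dist (P t2) (P t1)
                     + real k * \<gamma> * hausdorff_dist (P t2) (P t1)"
      proof (intro add_mono mult_left_mono)
        show "hausdorff_dist (P s) (P t1) \<le> hausdorff_dist (P t2) (P t1)"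
          using hd_mono[of "P t2" "P s" "P t1" "P t1"] anti s1 ne bd by auto
        show "hausdorff_dist (P t2) (P s) \<le> hausdorff_dist (P t2) (P t1)"
          using hd_mono[of "P t2" "P t2" "P s" "P t1"] anti s1 ne bd by auto
      qed (use True in auto)
      also have "\<dots> = real (Suc k) * \<gamma> * hausdorff_dist (P t2) (P t1)"
        by (simp add: algebra_simps)
      finally show ?thesis .
    qed
  qed
next
  case False
  assume t12: "t1 \<le> t2" "t2 - t1 \<le> k*T"
  show ?thesis
  proof (cases "T = 0")
    case True
    then have "t1 = t2" using t12 by simp
    then show ?thesis using hd_self[OF ne bd] by simp
  next
    case T0: False
    have step: "P (Suc t) = P t \<and> S (Suc t) \<le> 0" for t
    proof -
      have h: "S (Suc t) \<le> \<gamma> * hausdorff_dist (P (Suc t)) (P t)"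
      proof -
        have "{t<..Suc t} = {Suc t}" by auto
        then show ?thesis using hyp[rule_format, of t "Suc t"] T0 by simp
      qed
      have H0: "0 \<le> hausdorff_dist (P (Suc t)) (P t)"
        using hd_sub(2)[OF anti[of t "Suc t"] ne bd] by simp
      have "S (Suc t) \<ge> 0" using Snn by simp
      then have "\<gamma> * hausdorff_dist (P (Suc t)) (P t) \<ge> 0" using h by linarith
      then have "hausdorff_dist (P (Suc t)) (P t) \<le> 0" using False
        by (simp add: zero_le_mult_iff)
      then have "P (Suc t) = P t" using hd_zero[OF anti[of t "Suc t"] ne bd cl] by simp
      moreover have "S (Suc t) \<le> 0" using h \<open>hausdorff_dist _ _ \<le> 0\<close> H0 by simp
      ultimately show ?thesis by simp
    qed
    have const: "P t = P 0" for t by (induction t) (use step in auto)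
    have "sum S {t1<..t2} \<le> sum (\<lambda>_. 0) {t1<..t2}"
    proof (rule sum_mono)
      fix t assume "t \<in> {t1<..t2}"
      then obtain u where "t = Suc u" by (cases t) auto
      then show "S t \<le> 0" using step by simp
    qed
    then show ?thesis using const[of t1] const[of t2] hd_self[OF ne bd] by simp
  qed
qed

theorem corollary4:
  fixes TT :: "'p::metric_space \<Rightarrow> (nat \<Rightarrow> 'x \<Rightarrow> 'u \<Rightarrow> 'x) set"
    and K :: "'p set"
    and SEL :: "('x,'u) datapoint list \<Rightarrow> 'p"
    and \<gamma> :: real and T :: nat
  assumes "compact K"
    and "is_selection TT K SEL"
    and "weakly_competitive TT K SEL \<gamma> T"
  shows "\<forall>k::nat. weakly_competitive TT K SEL (real k * \<gamma>) (k * T)"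
proof (intro allI)
  fix k :: nat
  show "weakly_competitive TT K SEL (real k * \<gamma>) (k * T)"
    unfolding weakly_competitive_def
  proof (intro allI impI conjI)
    fix ds :: "nat \<Rightarrow> ('x,'u) datapoint" and t1 t2 :: nat
    assume ex: "\<exists>f\<in>param_family TT K. \<forall>t. consistent f (set (data_prefix ds t))"
      and t12: "t1 \<le> t2 \<and> t2 - t1 \<le> k * T"
    define P where "P t = consistent_set TT K (set (data_prefix ds t))" for t
    define S where "S t = dist (SEL (data_prefix ds t)) (SEL (data_prefix ds (t - 1)))" for t
    obtain f where f: "f \<in> param_family TT K" "\<And>t. consistent f (set (data_prefix ds t))"
      using ex by blast
    obtain \<theta> where th: "\<theta> \<in> K" "f \<in> TT \<theta>" using f(1) unfolding param_family_def by blast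
    have anti: "P t' \<subseteq> P t" if "t \<le> t'" for t t'
    proof -
      have sub: "set (data_prefix ds t) \<subseteq> set (data_prefix ds t')"
        using that unfolding data_prefix_def by auto
      have "{\<theta>\<in>K. \<exists>f\<in>TT \<theta>. consistent f (set (data_prefix ds t'))}
            \<subseteq> {\<theta>\<in>K. \<exists>f\<in>TT \<theta>. consistent f (set (data_prefix ds t))}"
        using sub unfolding consistent_def by blast
      then show ?thesis unfolding P_def consistent_set_def by (rule closure_mono)
    qed
    have ne: "P t \<noteq> {}" for t
    proof -
      have "\<theta> \<in> {\<theta>\<in>K. \<exists>f\<in>TT \<theta>. consistent f (set (data_prefix ds t))}"
        using th f(2) by blast
      then show ?thesis unfolding P_def consistent_set_def using closure_subset by blast
    qed
    have bd: "bounded (P t)" for t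
    proof -
      have "P t \<subseteq> closure K" unfolding P_def consistent_set_def
        by (rule closure_mono) blast
      also have "\<dots> = K" using assms(1) compact_imp_closed closure_closed by blast
      finally show ?thesis using assms(1) compact_imp_bounded bounded_subset by blast
    qed
    have cl: "closed (P t)" for t unfolding P_def consistent_set_def by simp
    have Snn: "0 \<le> S t" for t unfolding S_def by simp
    have hyp: "\<forall>t1 t2. t1 \<le> t2 \<and> t2 - t1 \<le> T \<longrightarrow>
                sum S {t1<..t2} \<le> \<gamma> * hausdorff_dist (P t2) (P t1)"
      using assms(3) ex unfolding weakly_competitive_def P_def S_def by blast
    have "sum S {t1<..t2} \<le> real k * \<gamma> * hausdorff_dist (P t2) (P t1)"
      using chain_main[OF anti ne bd cl Snn hyp] t12 by blast
    then show "(\<Sum>t\<in>{t1<..t2}. dist (SEL (data_prefix ds t)) (SEL (data_prefix ds (t - 1))))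
             \<le> real k * \<gamma> * hausdorff_dist (consistent_set TT K (set (data_prefix ds t2)))
                                    (consistent_set TT K (set (data_prefix ds t1)))"
      unfolding S_def P_def .
  qed
qed

end
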